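(* Let $\eta,\tau>0$ and $\nu\in\mathbb{R}$. For $\mu\in\mathbb{R}$ let $p_\mu(z)=\tau+(2\eta+2\mu-\tau)z+(2\eta-2\mu-\tau)z^2+\tau z^3$. Suppose $p_{\nu}$ has a root $\Omega_+$ in the open upper half-plane $\{\Im z>0\}$. Then $p_{-\nu}$ has exactly one root $\Omega_-$ in the open upper half-plane, and $\overline{\Omega_+}\,\Omega_-=1$.
   Context: $p_\mu$ is the numerator of $\partial_z G(\mu,\eta,\tau,z)=p_\mu(z)/(2z^2(z-1))$ for $G(\mu,\eta,\tau,z)=\tau\frac{z+z^{-1}}{2}+\eta\log\big(\frac{z+z^{-1}}{2}-1\big)-\mu\log z$; in the paper $\Omega(\mu,\eta,\tau)$ denotes the root of $p_\mu$ in the upper half-plane, and $\Omega_\pm=\Omega(\pm\nu,\eta,\tau)$. *)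

theory Defs
  imports "HOL-Analysis.Analysis"
begin

definition p_mu :: "real \<Rightarrow> real \<Rightarrow> real \<Rightarrow> complex \<Rightarrow> complex" where
  "p_mu \<mu> \<eta> \<tau> z = complex_of_real \<tau>
     + complex_of_real (2*\<eta> + 2*\<mu> - \<tau>) * z
     + complex_of_real (2*\<eta> - 2*\<mu> - \<tau>) * z^2
     + complex_of_real \<tau> * z^3"

end

theory Submission
  imports Defs
begin

lemma cnj_p: "cnj (p_mu m e t z) = p_mu m e t (cnj z)"
  unfolding p_mu_def by simp

lemma recip_p: assumes "c \<noteq> 0"
  shows "p_mu (-m) e t (1/c) * c^3 = p_mu m e t c"
  unfolding p_mu_def using assms
  by (simp add: field_simps power3_eq_cube power2_eq_square)

lemma factor3:
  fixes k l m n w y x :: complex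
  assumes "k + l*w + m*w^2 + n*w^3 = 0" "k + l*y + m*y^2 + n*y^3 = 0" "y \<noteq> w"
  shows "k + l*x + m*x^2 + n*x^3 = (x-w)*(x-y)*(m + n*(x+w+y))"
proof -
  have q: "l + m*(y+w) + n*(y^2+y*w+w^2) = 0"
  proof -
    have "(y-w)*(l + m*(y+w) + n*(y^2+y*w+w^2)) = 0"
      using assms(1,2) by (simp add: algebra_simps power2_eq_square power3_eq_cube)
         (metis (no_types, lifting) add_diff_cancel_left' diff_add_cancel diff_self)
    thus ?thesis using assms(3) by simp
  qed
  have "k + l*x + m*x^2 + n*x^3 = (k + l*x + m*x^2 + n*x^3) - (k + l*w + m*w^2 + n*w^3)"
    using assms(1) by simp
  also have "\<dots> = (x-w)*(l + m*(x+w) + n*(x^2+x*w+w^2))"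
    by (simp add: algebra_simps power2_eq_square power3_eq_cube)
  also have "\<dots> = (x-w)*((l + m*(x+w) + n*(x^2+x*w+w^2)) - (l + m*(y+w) + n*(y^2+y*w+w^2)))"
    using q by simp
  also have "\<dots> = (x-w)*(x-y)*(m + n*(x+w+y))"
    by (simp add: algebra_simps power2_eq_square)
  finally show ?thesis .
qed

theorem lemma3p3:
  fixes \<eta> \<tau> \<nu> :: real and \<Omega>p :: complex
  assumes "\<eta> > 0" and "\<tau> > 0"
    and "Im \<Omega>p > 0" and "p_mu \<nu> \<eta> \<tau> \<Omega>p = 0"
  shows "(\<exists>!\<Omega>m. Im \<Omega>m > 0 \<and> p_mu (-\<nu>) \<eta> \<tau> \<Omega>m = 0) \<and>
    (\<forall>\<Omega>m. Im \<Omega>m > 0 \<and> p_mu (-\<nu>) \<eta> \<tau> \<Omega>m = 0 \<longrightarrow> cnj \<Omega>p * \<Omega>m = 1)"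
proof -
  define c where "c = cnj \<Omega>p"
  define w where "w = 1 / c"
  have c0: "c \<noteq> 0" using assms(3) unfolding c_def by auto
  have pc: "p_mu \<nu> \<eta> \<tau> c = 0" using cnj_p[of \<nu> \<eta> \<tau> \<Omega>p] assms(4) unfolding c_def by simp
  have pw: "p_mu (-\<nu>) \<eta> \<tau> w = 0" using recip_p[OF c0, of \<nu> \<eta> \<tau>] pc c0 unfolding w_def by simp
  have imw: "Im w > 0" using assms(3) c0 unfolding w_def c_def
    by (simp add: Im_divide complex_neq_0 power2_eq_square add_pos_pos)
  have pcw: "p_mu (-\<nu>) \<eta> \<tau> (cnj w) = 0" using cnj_p[of "-\<nu>" \<eta> \<tau> w] pw by simp
  have ne: "cnj w \<noteq> w"
  proof
    assume "cnj w = w" hence "Im (cnj w) = Im w" by simp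
    thus False using imw by simp
  qed
  have uniq: "u = w" if "Im u > 0" "p_mu (-\<nu>) \<eta> \<tau> u = 0" for u
  proof (rule ccontr)
    assume "u \<noteq> w"
    have "u \<noteq> cnj w" using that imw by auto
    have F: "p_mu (-\<nu>) \<eta> \<tau> u = (u-w)*(u-cnj w)*(complex_of_real (2*\<eta> - 2*(-\<nu>) - \<tau>) + complex_of_real \<tau>*(u+w+cnj w))"
      using factor3[where k="complex_of_real \<tau>" and l="complex_of_real (2*\<eta> + 2*(-\<nu>) - \<tau>)" and m="complex_of_real (2*\<eta> - 2*(-\<nu>) - \<tau>)" and n="complex_of_real \<tau>" and w=w and y="cnj w" and x=u]
        pw pcw ne unfolding p_mu_def by simp
    hence "complex_of_real (2*\<eta> - 2*(-\<nu>) - \<tau>) + complex_of_real \<tau>*(u+w+cnj w) = 0"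
      using that \<open>u \<noteq> w\<close> \<open>u \<noteq> cnj w\<close> by simp
    hence "Im (complex_of_real (2*\<eta> - 2*(-\<nu>) - \<tau>) + complex_of_real \<tau>*(u+w+cnj w)) = 0" by simp
    hence "\<tau> * Im u = 0" by simp
    thus False using that assms(2) by simp
  qed
  have "cnj \<Omega>p * w = 1" using c0 unfolding w_def c_def by simp
  thus ?thesis using uniq imw pw by blast
qed

end
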